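(* For all integers $n \geq 3$ and $r \geq 3$, the graphs $K_n$ and $K_n + K_{n-1}$ are $r$-Ramsey equivalent; that is, a graph $G$ has the property that every edge-colouring of $G$ with $r$ colours contains a monochromatic copy of $K_n$ if and only if every edge-colouring of $G$ with $r$ colours contains a monochromatic copy of $K_n + K_{n-1}$.
   Context: All graphs are finite and simple. $K_m$ denotes the complete graph on $m$ vertices, and $K_n + K_{n-1}$ denotes the vertex-disjoint union of a copy of $K_n$ and a copy of $K_{n-1}$. For an integer $r \geq 2$, a graph $G$ is an $r$-Ramsey graph for a graph $H$ if every colouring of the edges of $G$ with $r$ colours admits a monochromatic copy of $H$ (a copy of $H$ as a subgraph of $G$ all of whose edges receive the same colour). Two graphs $H_1, H_2$ are $r$-Ramsey equivalent if every $r$-Ramsey graph for $H_1$ is an $r$-Ramsey graph for $H_2$, and vice versa. *)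

theory Defs
  imports Main
begin

definition simple_graph :: "'a set \<Rightarrow> 'a set set \<Rightarrow> bool" where
  "simple_graph V E \<longleftrightarrow> finite V \<and> (\<forall>e\<in>E. e \<subseteq> V \<and> card e = 2)"

definition K_verts :: "nat \<Rightarrow> nat set" where
  "K_verts m = {0..<m}"

definition K_edges :: "nat \<Rightarrow> nat set set" where
  "K_edges m = {e. e \<subseteq> {0..<m} \<and> card e = 2}"

definition disj_union_verts :: "'a set \<Rightarrow> 'b set \<Rightarrow> ('a + 'b) set" where
  "disj_union_verts V1 V2 = Inl ` V1 \<union> Inr ` V2"

definition disj_union_edges :: "'a set set \<Rightarrow> 'b set set \<Rightarrow> ('a + 'b) set set" where
  "disj_union_edges E1 E2 = (\<lambda>e. Inl ` e) ` E1 \<union> (\<lambda>e. Inr ` e) ` E2"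

definition mono_copy :: "'b set \<Rightarrow> 'b set set \<Rightarrow> 'a set \<Rightarrow> 'a set set \<Rightarrow> ('a set \<Rightarrow> nat) \<Rightarrow> bool" where
  "mono_copy VH EH V E c \<longleftrightarrow>
     (\<exists>f i. inj_on f VH \<and> f ` VH \<subseteq> V \<and> (\<forall>e\<in>EH. f ` e \<in> E \<and> c (f ` e) = i))"

definition is_ramsey :: "nat \<Rightarrow> 'b set \<Rightarrow> 'b set set \<Rightarrow> 'a set \<Rightarrow> 'a set set \<Rightarrow> bool" where
  "is_ramsey r VH EH V E \<longleftrightarrow>
     (\<forall>c :: 'a set \<Rightarrow> nat. (\<forall>e\<in>E. c e < r) \<longrightarrow> mono_copy VH EH V E c)"

end

theory Submission
  imports Defs
begin


definition mono_set :: "('b \<Rightarrow> 'b \<Rightarrow> nat) \<Rightarrow> nat \<Rightarrow> 'b set \<Rightarrow> bool" where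
  "mono_set col k Q \<longleftrightarrow> (\<forall>x\<in>Q. \<forall>y\<in>Q. x \<noteq> y \<longrightarrow> col x y = k)"

lemma proper_card:
  assumes "finite Q" "\<forall>x\<in>Q. \<forall>y\<in>Q. x \<noteq> y \<longrightarrow> \<rho> x \<noteq> (\<rho> y::nat)" "\<forall>x\<in>Q. \<rho> x < k"
  shows "card Q \<le> k"
proof -
  have "inj_on \<rho> Q" using assms(2) by (auto simp: inj_on_def)
  hence "card Q = card (\<rho> ` Q)" by (simp add: card_image)
  also have "\<dots> \<le> card {..<k}" by (rule card_mono) (use assms(3) in auto)
  finally show ?thesis by simp
qed

lemma modf1: "(r::nat) \<ge> 3 \<Longrightarrow> Suc t mod r \<noteq> t"
  by (metis Suc_n_not_le_n le_eq_less_or_eq less_Suc_eq mod_Suc mod_less mod_less_divisor not_less numeral_3_eq_3 zero_less_Suc zero_less_iff_neq_zero Suc_lessD less_le_trans)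

lemma modf2: "(r::nat) \<ge> 3 \<Longrightarrow> (t+2) mod r \<noteq> t"
proof
  assume r: "r \<ge> 3" and h: "(t+2) mod r = t"
  hence tr: "t < r" using mod_less_divisor[of r "t+2"] by linarith
  show False
  proof (cases "t + 2 < r")
    case True thus ?thesis using h by simp
  next
    case False
    hence "t + 2 = r \<or> t + 2 = r + 1" using tr by linarith
    thus ?thesis
    proof
      assume "t + 2 = r" thus False using h r by simp
    next
      assume e: "t + 2 = r + 1"
      hence "(t+2) mod r = 1" using r by (simp add: mod_Suc)
      thus False using h e r by simp
    qed
  qed
qed
lemma modf3: "(r::nat) \<ge> 3 \<Longrightarrow> Suc t mod r \<noteq> (t+2) mod r"
proof -
  assume r: "r \<ge> 3"
  have "(t+2) mod r = Suc (Suc t mod r) mod r" by (simp add: mod_Suc_eq)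
  thus ?thesis using modf1[OF r, of "Suc t mod r"] by simp
qed
definition col4 :: "nat \<Rightarrow> nat \<times> nat \<Rightarrow> nat \<times> nat \<Rightarrow> nat" where
  "col4 r x y = (if fst x < fst y then fst x else if fst y < fst x then fst y
     else if (snd x < 2) = (snd y < 2) then Suc (fst x) mod r else (fst x + 2) mod r)"

definition rho4 :: "nat \<Rightarrow> nat \<Rightarrow> nat \<times> nat \<Rightarrow> nat" where
  "rho4 r k x = (if fst x = k then 0 else if Suc (fst x) mod r = k then
      (if snd x < 2 then snd x + 1 else snd x - 1) else (if snd x < 2 then 1 else 2))"

lemma col4_sym: "col4 r x y = col4 r y x"
  unfolding col4_def by auto

lemma col4_lab: "r \<ge> 3 \<Longrightarrow> col4 r (t,p) (t,q) \<noteq> t"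
  unfolding col4_def using modf1[of r t] modf2[of r t] by auto

lemma col4_lt: "r \<ge> 3 \<Longrightarrow> fst x < r \<Longrightarrow> fst y < r \<Longrightarrow> col4 r x y < r"
  unfolding col4_def by auto

lemma rho4_proper:
  assumes r: "r \<ge> 3" and ne: "x \<noteq> y" and c: "col4 r x y = k"
  shows "rho4 r k x \<noteq> rho4 r k y"
proof -
  obtain s p where x: "x = (s,p)" by (cases x)
  obtain t q where y: "y = (t,q)" by (cases y)
  show ?thesis
  proof (cases "s = t")
    case False
    have p0: "\<And>z. fst z \<noteq> k \<Longrightarrow> rho4 r k z > 0" unfolding rho4_def by auto
    have z0: "\<And>z. fst z = k \<Longrightarrow> rho4 r k z = 0" unfolding rho4_def by auto
    show ?thesis
    proof (cases "s < t")
      case True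
      hence "k = s" using c unfolding x y col4_def by auto
      thus ?thesis using p0[of y] z0[of x] x y True by auto
    next
      case f: False
      hence "k = t" using c False unfolding x y col4_def by auto
      thus ?thesis using p0[of x] z0[of y] x y False by auto
    qed
  next
    case True
    hence pq: "p \<noteq> q" using ne x y by auto
    have a: "Suc t mod r \<noteq> t" "(t+2) mod r \<noteq> t" "Suc t mod r \<noteq> (t+2) mod r"
      using modf1[OF r] modf2[OF r] modf3[OF r] by auto
    show ?thesis
    proof (cases "(p < 2) = (q < 2)")
      case True
      thus ?thesis using c a pq \<open>s = t\<close> unfolding x y col4_def rho4_def by auto
    next
      case False
      thus ?thesis using c a pq \<open>s = t\<close> unfolding x y col4_def rho4_def by auto
    qed
  qed
qed

lemma rho4_lt: "n \<ge> 4 \<Longrightarrow> snd x < n \<Longrightarrow> rho4 r k x < n - 1"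
  unfolding rho4_def by auto

lemma col4_nomono:
  assumes "n \<ge> 4" "r \<ge> 3" "finite Q" "\<forall>x\<in>Q. snd x < n" "mono_set (col4 r) k Q"
  shows "card Q < n"
proof -
  have "card Q \<le> n - 1"
    by (rule proper_card[where \<rho>="rho4 r k"]) (use assms rho4_proper rho4_lt in \<open>auto simp: mono_set_def\<close>)
  thus ?thesis using assms(1) by linarith
qed
definition gtab :: "nat list list" where
"gtab = [[0, 1, 1, 0, 0, 2, 1, 0, 2],
[1, 0, 2, 0, 1, 1, 0, 1, 2],
[1, 2, 0, 1, 0, 1, 0, 2, 0],
[0, 0, 1, 0, 2, 0, 1, 1, 0],
[0, 1, 0, 2, 0, 0, 1, 2, 2],
[2, 1, 1, 0, 0, 0, 0, 2, 1],
[1, 0, 0, 1, 1, 0, 0, 0, 1],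
[0, 1, 2, 1, 2, 2, 0, 0, 1],
[2, 2, 0, 0, 2, 1, 1, 1, 0]]"

lemma gtab_tri: "\<forall>a\<in>set [0..<9]. \<forall>b\<in>set [0..<9]. \<forall>c\<in>set [0..<9]. a \<noteq> b \<longrightarrow> a \<noteq> c \<longrightarrow> b \<noteq> c \<longrightarrow>
   \<not> (gtab ! a ! b = gtab ! a ! c \<and> gtab ! a ! b = gtab ! b ! c)"
  by (code_simp)
lemma gtab_sym: "\<forall>a\<in>set [0..<9]. \<forall>b\<in>set [0..<9]. gtab ! a ! b = gtab ! b ! a"
  by code_simp
lemma gtab_lt: "\<forall>a\<in>set [0..<9]. \<forall>b\<in>set [0..<9]. gtab ! a ! b < 3"
  by code_simp
lemma gtab_lab: "\<forall>i\<in>set [0..<3]. \<forall>p\<in>set [0..<3]. \<forall>q\<in>set [0..<3]. p \<noteq> q \<longrightarrow> gtab ! (3*i+p) ! (3*i+q) \<noteq> i"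
  by code_simp

lemma gtab_tri': "a < 9 \<Longrightarrow> b < 9 \<Longrightarrow> c < 9 \<Longrightarrow> a \<noteq> b \<Longrightarrow> a \<noteq> c \<Longrightarrow> b \<noteq> c \<Longrightarrow>
   gtab ! a ! b = gtab ! a ! c \<Longrightarrow> gtab ! a ! b = gtab ! b ! c \<Longrightarrow> False"
proof -
  assume h: "a < 9" "b < 9" "c < 9" "a \<noteq> b" "a \<noteq> c" "b \<noteq> c"
     "gtab ! a ! b = gtab ! a ! c" "gtab ! a ! b = gtab ! b ! c"
  have "a \<in> set [0..<9]" "b \<in> set [0..<9]" "c \<in> set [0..<9]" using h by auto
  from gtab_tri[rule_format, OF this h(4-6)] h(7,8) show False by blast
qed
lemma gtab_sym': "a < 9 \<Longrightarrow> b < 9 \<Longrightarrow> gtab ! a ! b = gtab ! b ! a"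
  using gtab_sym by auto
lemma gtab_lt': "a < 9 \<Longrightarrow> b < 9 \<Longrightarrow> gtab ! a ! b < 3"
  using gtab_lt by auto
lemma gtab_lab': "i < 3 \<Longrightarrow> p < 3 \<Longrightarrow> q < 3 \<Longrightarrow> p \<noteq> q \<Longrightarrow> gtab ! (3*i+p) ! (3*i+q) \<noteq> i"
  using gtab_lab by auto

definition col3 :: "nat \<Rightarrow> nat \<times> nat \<Rightarrow> nat \<times> nat \<Rightarrow> nat" where
  "col3 r x y = (if fst x < fst y \<and> fst x < r - 3 then fst x
     else if fst y < fst x \<and> fst y < r - 3 then fst y
     else if fst x = fst y \<and> fst x < r - 3 then (if (snd x < 2) = (snd y < 2) then Suc (fst x) else fst x + 2)
     else (r - 3) + gtab ! (3 * (fst x - (r - 3)) + snd x) ! (3 * (fst y - (r - 3)) + snd y))"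

definition X3 :: "nat \<Rightarrow> (nat \<times> nat) set" where "X3 r = {0..<r} \<times> {0..<3}"

lemma col3_sym: "x \<in> X3 r \<Longrightarrow> y \<in> X3 r \<Longrightarrow> col3 r x y = col3 r y x"
  unfolding col3_def X3_def using gtab_sym' by (auto simp: mem_Times_iff)

lemma col3_lt: "r \<ge> 3 \<Longrightarrow> x \<in> X3 r \<Longrightarrow> y \<in> X3 r \<Longrightarrow> col3 r x y < r"
proof -
  assume r: "r \<ge> 3" and x: "x \<in> X3 r" and y: "y \<in> X3 r"
  have "gtab ! (3 * (fst x - (r - 3)) + snd x) ! (3 * (fst y - (r - 3)) + snd y) < 3"
    by (rule gtab_lt') (use x y in \<open>auto simp: X3_def mem_Times_iff\<close>)
  thus ?thesis using r x y unfolding col3_def X3_def by (auto simp: mem_Times_iff)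
qed

lemma col3_lab: "r \<ge> 3 \<Longrightarrow> t < r \<Longrightarrow> p < 3 \<Longrightarrow> q < 3 \<Longrightarrow> p \<noteq> q \<Longrightarrow> col3 r (t,p) (t,q) \<noteq> t"
proof -
  assume a: "r \<ge> 3" "t < r" "p < 3" "q < 3" "p \<noteq> q"
  show ?thesis
  proof (cases "t < r - 3")
    case True thus ?thesis unfolding col3_def by auto
  next
    case False
    have "gtab ! (3*(t - (r-3))+p) ! (3*(t-(r-3))+q) \<noteq> t - (r-3)"
      by (rule gtab_lab') (use a False in auto)
    thus ?thesis using False a unfolding col3_def by auto
  qed
qed
definition rho3 :: "nat \<Rightarrow> nat \<times> nat \<Rightarrow> nat" where
  "rho3 k x = (if fst x = k then 0 else if k < fst x then 1 else if Suc (fst x) = k then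
      (if snd x = 0 then 0 else 1) else (if snd x = 2 then 1 else 0))"

lemma rho3_proper:
  assumes r: "r \<ge> 3" and kg: "k < r - 3" and x: "x \<in> X3 r" and y: "y \<in> X3 r"
    and ne: "x \<noteq> y" and c: "col3 r x y = k"
  shows "rho3 k x \<noteq> rho3 k y"
proof -
  obtain s p where xx: "x = (s,p)" by (cases x)
  obtain t q where yy: "y = (t,q)" by (cases y)
  have pq: "p < 3" "q < 3" using x y xx yy by (auto simp: X3_def)
  show ?thesis
  proof (cases "s = t")
    case False
    show ?thesis
    proof (cases "s < t")
      case True
      show ?thesis
      proof (cases "s < r - 3")
        case True
        hence "k = s" using c \<open>s < t\<close> unfolding xx yy col3_def by simp
        thus ?thesis using \<open>s < t\<close> unfolding xx yy rho3_def by simp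
      next
        case False
        hence "col3 r x y \<ge> r - 3" using \<open>s < t\<close> unfolding xx yy col3_def by simp
        thus ?thesis using c kg by simp
      qed
    next
      case f: False
      hence ts: "t < s" using False by simp
      show ?thesis
      proof (cases "t < r - 3")
        case True
        hence "k = t" using c ts unfolding xx yy col3_def by simp
        thus ?thesis using ts unfolding xx yy rho3_def by simp
      next
        case False
        hence "col3 r x y \<ge> r - 3" using ts unfolding xx yy col3_def by simp
        thus ?thesis using c kg by simp
      qed
    qed
  next
    case True
    hence "p \<noteq> q" using ne xx yy by auto
    note pq' = this
    show ?thesis
    proof (cases "s < r - 3")
      case False
      hence "col3 r x y \<ge> r - 3" using \<open>s = t\<close> unfolding xx yy col3_def by simp
      thus ?thesis using c kg by simp
    next
      case sg: True
      show ?thesis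
      proof (cases "(p < 2) = (q < 2)")
        case True
        hence "k = Suc s" using c sg \<open>s = t\<close> unfolding xx yy col3_def by simp
        moreover have "(p = 0 \<and> q = 1) \<or> (p = 1 \<and> q = 0)" using True pq pq' by auto
        ultimately show ?thesis using \<open>s = t\<close> unfolding xx yy rho3_def by auto
      next
        case False
        hence "k = s + 2" using c sg \<open>s = t\<close> unfolding xx yy col3_def by simp
        moreover have "(p = 2 \<and> q < 2) \<or> (q = 2 \<and> p < 2)" using False pq by auto
        ultimately show ?thesis using \<open>s = t\<close> unfolding xx yy rho3_def by auto
      qed
    qed
  qed
qed

lemma idx_inj: "p < 3 \<Longrightarrow> q < (3::nat) \<Longrightarrow> 3 * A + p = 3 * B + q \<Longrightarrow> A = B \<and> p = q"
  by presburger

lemma col3_notri: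
  assumes r: "r \<ge> 3" and QX: "Q \<subseteq> X3 r" and cQ: "card Q = 3" and m: "mono_set (col3 r) k Q"
  shows False
proof -
  have fQ: "finite Q" using cQ by (metis card.infinite zero_neq_numeral)
  show False
  proof (cases "k < r - 3")
    case True
    have "card Q \<le> 2"
    proof (rule proper_card[where \<rho>="rho3 k"])
      show "finite Q" by (rule fQ)
      show "\<forall>x\<in>Q. \<forall>y\<in>Q. x \<noteq> y \<longrightarrow> rho3 k x \<noteq> rho3 k y"
      proof (intro ballI impI)
        fix x y assume "x \<in> Q" "y \<in> Q" "x \<noteq> y"
        moreover hence "col3 r x y = k" using m by (simp add: mono_set_def)
        ultimately show "rho3 k x \<noteq> rho3 k y" using rho3_proper[OF r True] QX by blast
      qed
      show "\<forall>x\<in>Q. rho3 k x < 2" unfolding rho3_def by simp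
    qed
    thus False using cQ by simp
  next
    case kF: False
    show False
    proof (cases "\<exists>x\<in>Q. fst x < r - 3")
      case True
      then obtain x where xQ: "x \<in> Q" and xs: "fst x < r - 3" by auto
      define s where "s = fst x"
      have sub: "Q \<subseteq> {s} \<times> {0..<3}"
      proof
        fix y assume yQ: "y \<in> Q"
        have "fst y = s"
        proof (rule ccontr)
          assume ne: "fst y \<noteq> s"
          hence "x \<noteq> y" using s_def by auto
          hence "col3 r x y = k" using m xQ yQ by (auto simp: mono_set_def)
          thus False using ne kF xs unfolding s_def col3_def by (auto split: if_splits)
        qed
        thus "y \<in> {s} \<times> {0..<3}" using QX yQ by (auto simp: X3_def mem_Times_iff)
      qed
      have "Q = {s} \<times> {0..<3}"
        by (rule card_subset_eq) (use sub cQ in auto)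
      hence "(s,0) \<in> Q" "(s,1) \<in> Q" "(s,2) \<in> Q" by auto
      hence "col3 r (s,0) (s,1) = k" "col3 r (s,0) (s,2) = k" using m by (auto simp: mono_set_def)
      thus False using xs unfolding s_def col3_def by auto
    next
      case False
      hence ge: "\<forall>x\<in>Q. r - 3 \<le> fst x" by auto
      define idx where "idx x = 3 * (fst x - (r - 3)) + snd x" for x :: "nat \<times> nat"
      have idx9: "\<forall>x\<in>Q. idx x < 9" using QX r unfolding idx_def X3_def by (auto simp: mem_Times_iff)
      have idxinj: "\<forall>x\<in>Q. \<forall>y\<in>Q. idx x = idx y \<longrightarrow> x = y"
      proof (intro ballI impI)
        fix x y assume xQ: "x \<in> Q" and yQ: "y \<in> Q" and e: "idx x = idx y"
        have "snd x < 3" "snd y < 3" using QX xQ yQ by (auto simp: X3_def mem_Times_iff)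
        hence "fst x - (r-3) = fst y - (r-3) \<and> snd x = snd y" using e unfolding idx_def by (rule idx_inj)
        moreover have "r - 3 \<le> fst x" "r - 3 \<le> fst y" using ge xQ yQ by auto
        ultimately have "fst x = fst y" "snd x = snd y" by arith+
        thus "x = y" by (simp add: prod_eq_iff)
      qed
      have cv: "\<forall>x\<in>Q. \<forall>y\<in>Q. col3 r x y = (r-3) + gtab ! idx x ! idx y"
        using ge unfolding col3_def idx_def by auto
      obtain a b c where abc: "Q = {a,b,c}" "a \<noteq> b" "b \<noteq> c" "a \<noteq> c" using cQ[unfolded card_3_iff] by blast
      have ins: "a \<in> Q" "b \<in> Q" "c \<in> Q" using abc by auto
      have "col3 r a b = k" "col3 r a c = k" "col3 r b c = k" using m ins abc by (auto simp: mono_set_def)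
      hence e: "gtab ! idx a ! idx b = gtab ! idx a ! idx c" "gtab ! idx a ! idx b = gtab ! idx b ! idx c"
        using cv ins by auto
      show False
        by (rule gtab_tri'[OF _ _ _ _ _ _ e]) (use idx9 idxinj ins abc in blast)+
    qed
  qed
qed
lemma abstract_col:
  assumes n: "n \<ge> 3" and r: "r \<ge> 3"
  shows "\<exists>col. (\<forall>x\<in>{0..<r}\<times>{0..<n}. \<forall>y\<in>{0..<r}\<times>{0..<n}. col x y = col y x \<and> col x y < r) \<and>
     (\<forall>t p q. t < r \<and> p < n \<and> q < n \<and> p \<noteq> q \<longrightarrow> col (t,p) (t,q) \<noteq> t) \<and>
     (\<forall>Q k. Q \<subseteq> {0..<r}\<times>{0..<n} \<and> card Q = n \<longrightarrow> \<not> mono_set col k Q)"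
proof (cases "n = 3")
  case True
  have X: "{0..<r}\<times>{0..<n} = X3 r" unfolding X3_def True by simp
  show ?thesis
  proof (intro exI[of _ "col3 r"] conjI allI impI ballI)
    fix x y assume "x \<in> {0..<r}\<times>{0..<n}" "y \<in> {0..<r}\<times>{0..<n}"
    thus "col3 r x y = col3 r y x" "col3 r x y < r" using col3_sym col3_lt r X by auto
  next
    fix t p q assume "t < r \<and> p < n \<and> q < n \<and> p \<noteq> q"
    thus "col3 r (t,p) (t,q) \<noteq> t" using col3_lab r True by auto
  next
    fix Q k assume "Q \<subseteq> {0..<r}\<times>{0..<n} \<and> card Q = n"
    thus "\<not> mono_set (col3 r) k Q" using col3_notri[OF r, of Q k] X True by auto
  qed
next
  case False
  hence n4: "n \<ge> 4" using n by simp
  show ?thesis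
  proof (intro exI[of _ "col4 r"] conjI allI impI ballI)
    fix x y assume "x \<in> {0..<r}\<times>{0..<n}" "y \<in> {0..<r}\<times>{0..<n}"
    thus "col4 r x y = col4 r y x" "col4 r x y < r" using col4_sym col4_lt r by auto
  next
    fix t p q assume "t < r \<and> p < n \<and> q < n \<and> p \<noteq> q"
    thus "col4 r (t,p) (t,q) \<noteq> t" using col4_lab r by auto
  next
    fix Q k assume a: "Q \<subseteq> {0..<r}\<times>{0..<n} \<and> card Q = n"
    hence "finite Q" using finite_subset by blast
    moreover have "\<forall>x\<in>Q. snd x < n" using a by auto
    ultimately show "\<not> mono_set (col4 r) k Q" using col4_nomono[OF n4 r] a by fastforce
  qed
qed

lemma colouring_U:
  assumes n: "n \<ge> 3" and r: "r \<ge> 3" and fU: "finite U" and cU: "card U \<le> card J * n"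
    and J: "J \<subseteq> {..<r}"
  shows "\<exists>(col' :: 'a \<Rightarrow> 'a \<Rightarrow> nat) \<phi>. (\<forall>u\<in>U. \<phi> u \<in> J) \<and>
     (\<forall>u\<in>U. \<forall>v\<in>U. col' u v = col' v u \<and> col' u v < r) \<and>
     (\<forall>u\<in>U. \<forall>v\<in>U. u \<noteq> v \<and> \<phi> u = \<phi> v \<longrightarrow> col' u v \<noteq> \<phi> u) \<and>
     (\<forall>Q k. Q \<subseteq> U \<and> card Q = n \<longrightarrow> \<not> mono_set col' k Q)"
proof -
  obtain col where colsym: "\<forall>x\<in>{0..<r}\<times>{0..<n}. \<forall>y\<in>{0..<r}\<times>{0..<n}. col x y = col y x \<and> col x y < r"
    and collab: "\<forall>t p q. t < r \<and> p < n \<and> q < n \<and> p \<noteq> q \<longrightarrow> col (t,p) (t,q) \<noteq> t"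
    and colmono: "\<forall>Q k. Q \<subseteq> {0..<r}\<times>{0..<n} \<and> card Q = n \<longrightarrow> \<not> mono_set col k Q"
    using abstract_col[OF n r] by blast
  define m where "m = card J"
  have fJ: "finite J" using J finite_subset by blast
  have mr: "m \<le> r" unfolding m_def using card_mono[OF _ J] by simp
  obtain \<sigma> where \<sigma>: "bij_betw \<sigma> {0..<m} J" using ex_bij_betw_nat_finite[OF fJ] m_def by blast
  define C where "C = {0..<r} - J"
  have cC: "card C = r - m" unfolding C_def m_def using J by (simp add: card_Diff_subset fJ lessThan_atLeast0)
  obtain \<tau> where \<tau>: "bij_betw \<tau> {0..<r-m} C" using ex_bij_betw_nat_finite[of C] cC unfolding C_def by auto
  define \<pi> where "\<pi> t = (if t < m then \<sigma> t else \<tau> (t - m))" for t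
  have piJ: "\<And>t. t < m \<Longrightarrow> \<pi> t \<in> J" unfolding \<pi>_def using \<sigma> by (auto simp: bij_betw_def)
  have pir: "\<And>t. t < r \<Longrightarrow> \<pi> t < r"
  proof -
    fix t assume "t < r"
    show "\<pi> t < r"
    proof (cases "t < m")
      case True thus ?thesis using piJ J by auto
    next
      case False
      hence "\<tau> (t - m) \<in> C" using \<tau> \<open>t < r\<close> by (auto simp: bij_betw_def)
      thus ?thesis using False unfolding \<pi>_def C_def by auto
    qed
  qed
  have piinj: "\<And>t1 t2. t1 < r \<Longrightarrow> t2 < r \<Longrightarrow> \<pi> t1 = \<pi> t2 \<Longrightarrow> t1 = t2"
  proof -
    fix t1 t2 assume a: "t1 < r" "t2 < r" "\<pi> t1 = \<pi> t2"
    have sJ: "\<And>t. t < m \<Longrightarrow> \<sigma> t \<in> J" using \<sigma> by (auto simp: bij_betw_def)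
    have tC: "\<And>t. t < r \<Longrightarrow> \<not> t < m \<Longrightarrow> \<tau> (t - m) \<in> C" using \<tau> by (auto simp: bij_betw_def)
    show "t1 = t2"
    proof (cases "t1 < m"; cases "t2 < m")
      assume "t1 < m" "t2 < m"
      thus ?thesis using a \<sigma> unfolding \<pi>_def by (auto simp: bij_betw_def inj_on_def)
    next
      assume "t1 < m" "\<not> t2 < m"
      thus ?thesis using a sJ tC unfolding \<pi>_def C_def by force
    next
      assume "\<not> t1 < m" "t2 < m"
      thus ?thesis using a sJ tC unfolding \<pi>_def C_def by force
    next
      assume b: "\<not> t1 < m" "\<not> t2 < m"
      hence "\<tau> (t1 - m) = \<tau> (t2 - m)" using a unfolding \<pi>_def by simp
      moreover have "t1 - m \<in> {0..<r-m}" "t2 - m \<in> {0..<r-m}" using a b by auto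
      ultimately have "t1 - m = t2 - m" using \<tau> by (auto simp: bij_betw_def inj_on_def)
      thus ?thesis using b by simp
    qed
  qed
  have "card ({0..<m} \<times> {0..<n}) = m * n" by (simp add: card_cartesian_product)
  then obtain h where h: "h ` U \<subseteq> {0..<m} \<times> {0..<n}" "inj_on h U"
    using card_le_inj[OF fU, of "{0..<m} \<times> {0..<n}"] cU m_def by auto
  have hX: "\<And>u. u \<in> U \<Longrightarrow> h u \<in> {0..<r} \<times> {0..<n}" using h(1) mr by fastforce
  have colr: "\<And>a b. a \<in> U \<Longrightarrow> b \<in> U \<Longrightarrow> col (h a) (h b) < r"
    using colsym hX by blast
  define col' where "col' u v = \<pi> (col (h u) (h v))" for u v
  define \<phi> where "\<phi> u = \<pi> (fst (h u))" for u
  show ?thesis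
  proof (intro exI[of _ col'] exI[of _ \<phi>] conjI ballI allI impI)
    fix u assume "u \<in> U"
    thus "\<phi> u \<in> J" unfolding \<phi>_def using h(1) piJ by fastforce
  next
    fix u v assume "u \<in> U" "v \<in> U"
    hence hh: "h u \<in> {0..<r} \<times> {0..<n}" "h v \<in> {0..<r} \<times> {0..<n}" using hX by auto
    have "col (h u) (h v) = col (h v) (h u)" "col (h u) (h v) < r" using colsym[rule_format, OF hh] by auto
    thus "col' u v = col' v u" "col' u v < r" unfolding col'_def using pir by auto
  next
    fix u v assume uv: "u \<in> U" "v \<in> U" "u \<noteq> v \<and> \<phi> u = \<phi> v"
    obtain t p where hu: "h u = (t,p)" by (cases "h u")
    obtain t' q where hv: "h v = (t',q)" by (cases "h v")
    have rng: "t < r" "t' < r" "p < n" "q < n" using hX[OF uv(1)] hX[OF uv(2)] hu hv by auto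
    have "t = t'" using uv(3) piinj rng unfolding \<phi>_def hu hv by auto
    moreover have "h u \<noteq> h v" using uv h(2) by (auto simp: inj_on_def)
    ultimately have "p \<noteq> q" using hu hv by auto
    hence "col (t,p) (t,q) \<noteq> t" using collab rng by auto
    moreover have "col (t,p) (t,q) < r" using colsym hX[OF uv(1)] hX[OF uv(2)] hu hv \<open>t = t'\<close> by auto
    ultimately have "\<pi> (col (t,p) (t,q)) \<noteq> \<pi> t" using piinj rng by blast
    thus "col' u v \<noteq> \<phi> u" unfolding col'_def \<phi>_def using hu hv \<open>t = t'\<close> by simp
  next
    fix Q k assume a: "Q \<subseteq> U \<and> card Q = n"
    show "\<not> mono_set col' k Q"
    proof
      assume mo: "mono_set col' k Q"
      have fQ: "finite Q" using a fU finite_subset by blast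
      have "Q \<noteq> {}" using a n by auto
      then obtain x0 where x0: "x0 \<in> Q" by blast
      have "card (Q - {x0}) = n - 1" using a x0 fQ by simp
      hence "Q - {x0} \<noteq> {}" using n by (metis card.empty diff_is_0_eq le_trans numeral_le_one_iff semiring_norm(70) not_one_le_zero One_nat_def)
      then obtain y0 where y0: "y0 \<in> Q" "y0 \<noteq> x0" by blast
      define k0 where "k0 = col (h x0) (h y0)"
      have injQ: "inj_on h Q" using h(2) a inj_on_subset by blast
      have "mono_set col k0 (h ` Q)"
        unfolding mono_set_def
      proof (intro ballI impI)
        fix x y assume "x \<in> h ` Q" "y \<in> h ` Q" "x \<noteq> y"
        then obtain u v where uv: "u \<in> Q" "v \<in> Q" "x = h u" "y = h v" "u \<noteq> v" by blast
        have "\<pi> (col x y) = k" using mo uv unfolding mono_set_def col'_def by auto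
        moreover have "\<pi> k0 = k" using mo x0 y0 unfolding mono_set_def col'_def k0_def by auto
        moreover have "col x y < r" "k0 < r" using colr uv a x0 y0 unfolding k0_def by auto
        ultimately show "col x y = k0" using piinj by metis
      qed
      moreover have "h ` Q \<subseteq> {0..<r} \<times> {0..<n}" using hX a by blast
      moreover have "card (h ` Q) = n" using card_image[OF injQ] a by simp
      ultimately show False using colmono by blast
    qed
  qed
qed


definition mclq :: "'a set \<Rightarrow> 'a set set \<Rightarrow> ('a set \<Rightarrow> nat) \<Rightarrow> nat \<Rightarrow> 'a set \<Rightarrow> bool" where
  "mclq V E c i Q \<longleftrightarrow> Q \<subseteq> V \<and> (\<forall>x\<in>Q. \<forall>y\<in>Q. x \<noteq> y \<longrightarrow> {x,y} \<in> E \<and> c {x,y} = i)"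

lemma mclq_subset: "mclq V E c i Q \<Longrightarrow> B \<subseteq> Q \<Longrightarrow> mclq V E c i B"
  unfolding mclq_def by blast

lemma clique_of_copy:
  assumes "mono_copy (K_verts n) (K_edges n) V E c"
  shows "\<exists>Q i. card Q = n \<and> mclq V E c i Q"
proof -
  obtain f i where f: "inj_on f {0..<n}" "f ` {0..<n} \<subseteq> V"
    "\<forall>e\<in>K_edges n. f ` e \<in> E \<and> c (f ` e) = i"
    using assms unfolding mono_copy_def K_verts_def by blast
  have "card (f ` {0..<n}) = n" using card_image[OF f(1)] by simp
  moreover have "mclq V E c i (f ` {0..<n})"
    unfolding mclq_def
  proof (intro conjI ballI impI)
    show "f ` {0..<n} \<subseteq> V" by (rule f(2))
  next
    fix x y assume "x \<in> f ` {0..<n}" "y \<in> f ` {0..<n}" "x \<noteq> y"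
    then obtain a b where ab: "a \<in> {0..<n}" "b \<in> {0..<n}" "x = f a" "y = f b" "a \<noteq> b" by blast
    have "{a,b} \<in> K_edges n" using ab unfolding K_edges_def by auto
    hence "f ` {a,b} \<in> E \<and> c (f ` {a,b}) = i" using f(3) by blast
    thus "{x,y} \<in> E" "c {x,y} = i" using ab by auto
  qed
  ultimately show ?thesis by blast
qed

lemma union_of_cliques:
  assumes n: "n \<ge> 3" and c1: "card Q1 = n" and c2: "card Q2 = n - 1" and d: "Q1 \<inter> Q2 = {}"
    and m1: "mclq V E c i Q1" and m2: "mclq V E c i Q2"
  shows "mono_copy (disj_union_verts (K_verts n) (K_verts (n - 1)))
                     (disj_union_edges (K_edges n) (K_edges (n - 1))) V E c"
proof -
  have fin1: "finite Q1" by (rule card_ge_0_finite) (use c1 n in simp)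
  have fin2: "finite Q2" by (rule card_ge_0_finite) (use c2 n in simp)
  obtain f1 where f1: "bij_betw f1 {0..<n} Q1" using ex_bij_betw_nat_finite[OF fin1] c1 by auto
  obtain f2 where f2: "bij_betw f2 {0..<n-1} Q2" using ex_bij_betw_nat_finite[OF fin2] c2 by auto
  define f where "f = case_sum f1 f2"
  show ?thesis
    unfolding mono_copy_def
  proof (intro exI[of _ f] exI[of _ i] conjI ballI)
    show "inj_on f (disj_union_verts (K_verts n) (K_verts (n - 1)))"
      unfolding inj_on_def
    proof (intro ballI impI)
      fix x y assume x: "x \<in> disj_union_verts (K_verts n) (K_verts (n - 1))"
        and y: "y \<in> disj_union_verts (K_verts n) (K_verts (n - 1))" and e: "f x = f y"
      have i1: "inj_on f1 {0..<n}" and i2: "inj_on f2 {0..<n-1}"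
        and r1: "f1 ` {0..<n} = Q1" and r2: "f2 ` {0..<n-1} = Q2" using f1 f2 by (auto simp: bij_betw_def)
      show "x = y"
      proof (cases x)
        case (Inl a)
        hence a: "a \<in> {0..<n}" using x unfolding disj_union_verts_def K_verts_def by auto
        show ?thesis
        proof (cases y)
          case (Inl b)
          hence b: "b \<in> {0..<n}" using y unfolding disj_union_verts_def K_verts_def by auto
          have "f1 a = f1 b" using e Inl \<open>x = Inl a\<close> unfolding f_def by simp
          thus ?thesis using i1 a b Inl \<open>x = Inl a\<close> by (auto simp: inj_on_def)
        next
          case (Inr b)
          hence b: "b \<in> {0..<n-1}" using y unfolding disj_union_verts_def K_verts_def by auto
          have "f1 a = f2 b" using e Inr \<open>x = Inl a\<close> unfolding f_def by simp
          moreover have "f1 a \<in> Q1" "f2 b \<in> Q2" using r1 r2 a b by auto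
          ultimately show ?thesis using d by auto
        qed
      next
        case (Inr a)
        hence a: "a \<in> {0..<n-1}" using x unfolding disj_union_verts_def K_verts_def by auto
        show ?thesis
        proof (cases y)
          case (Inl b)
          hence b: "b \<in> {0..<n}" using y unfolding disj_union_verts_def K_verts_def by auto
          have "f2 a = f1 b" using e Inl \<open>x = Inr a\<close> unfolding f_def by simp
          moreover have "f1 b \<in> Q1" "f2 a \<in> Q2" using r1 r2 a b by auto
          ultimately show ?thesis using d by auto
        next
          case (Inr b)
          hence b: "b \<in> {0..<n-1}" using y unfolding disj_union_verts_def K_verts_def by auto
          have "f2 a = f2 b" using e Inr \<open>x = Inr a\<close> unfolding f_def by simp
          thus ?thesis using i2 a b Inr \<open>x = Inr a\<close> by (auto simp: inj_on_def)
        qed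
      qed
    qed
    show "f ` disj_union_verts (K_verts n) (K_verts (n - 1)) \<subseteq> V"
    proof -
      have "f ` disj_union_verts (K_verts n) (K_verts (n - 1)) = f1 ` {0..<n} \<union> f2 ` {0..<n-1}"
        unfolding disj_union_verts_def K_verts_def f_def by (simp add: image_Un image_comp)
      also have "\<dots> = Q1 \<union> Q2" using f1 f2 by (simp add: bij_betw_def)
      also have "\<dots> \<subseteq> V" using m1 m2 unfolding mclq_def by blast
      finally show ?thesis .
    qed
  next
    fix e assume e: "e \<in> disj_union_edges (K_edges n) (K_edges (n - 1))"
    have "f ` e \<in> E \<and> c (f ` e) = i"
    proof (cases "\<exists>e'\<in>K_edges n. e = Inl ` e'")
      case True
      then obtain e' where e': "e' \<in> K_edges n" "e = Inl ` e'" by blast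
      then obtain a b where ab: "e' = {a,b}" "a \<noteq> b" unfolding K_edges_def card_2_iff by blast
      have abn: "a < n" "b < n" using e' ab unfolding K_edges_def by auto
      have fe: "f ` e = {f1 a, f1 b}" using e' ab unfolding f_def by auto
      have "f1 a \<in> Q1" "f1 b \<in> Q1" "f1 a \<noteq> f1 b" using f1 abn ab by (auto simp: bij_betw_def inj_on_def)
      thus ?thesis using m1 fe unfolding mclq_def by simp
    next
      case False
      then obtain e' where e': "e' \<in> K_edges (n-1)" "e = Inr ` e'" using e unfolding disj_union_edges_def by blast
      then obtain a b where ab: "e' = {a,b}" "a \<noteq> b" unfolding K_edges_def card_2_iff by blast
      have abn: "a < n-1" "b < n-1" using e' ab unfolding K_edges_def by auto
      have fe: "f ` e = {f2 a, f2 b}" using e' ab unfolding f_def by auto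
      have "f2 a \<in> Q2" "f2 b \<in> Q2" "f2 a \<noteq> f2 b" using f2 abn ab by (auto simp: bij_betw_def inj_on_def)
      thus ?thesis using m2 fe unfolding mclq_def by simp
    qed
    thus "f ` e \<in> E" "c (f ` e) = i" by auto
  qed
qed

lemma easy_dir:
  assumes "is_ramsey r (disj_union_verts (K_verts n) (K_verts (n - 1)))
                     (disj_union_edges (K_edges n) (K_edges (n - 1))) V E"
  shows "is_ramsey r (K_verts n) (K_edges n) V E"
  unfolding is_ramsey_def
proof (intro allI impI)
  fix c :: "'a set \<Rightarrow> nat" assume "\<forall>e\<in>E. c e < r"
  then obtain f i where f: "inj_on f (disj_union_verts (K_verts n) (K_verts (n - 1)))"
     "f ` disj_union_verts (K_verts n) (K_verts (n - 1)) \<subseteq> V"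
     "\<forall>e\<in>disj_union_edges (K_edges n) (K_edges (n - 1)). f ` e \<in> E \<and> c (f ` e) = i"
    using assms unfolding is_ramsey_def mono_copy_def by blast
  show "mono_copy (K_verts n) (K_edges n) V E c"
    unfolding mono_copy_def
  proof (intro exI[of _ "f \<circ> Inl"] exI[of _ i] conjI ballI)
    show "inj_on (f \<circ> Inl) (K_verts n)"
      using f(1) unfolding disj_union_verts_def by (auto simp: inj_on_def)
    show "(f \<circ> Inl) ` K_verts n \<subseteq> V" using f(2) unfolding disj_union_verts_def by auto
  next
    fix e assume "e \<in> K_edges n"
    hence "Inl ` e \<in> disj_union_edges (K_edges n) (K_edges (n - 1))" unfolding disj_union_edges_def by auto
    hence "f ` (Inl ` e) \<in> E \<and> c (f ` (Inl ` e)) = i" using f(3) by blast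
    thus "(f \<circ> Inl) ` e \<in> E" "c ((f \<circ> Inl) ` e) = i" by (auto simp: image_comp)
  qed
qed
lemma hard_dir:
  fixes V :: "'a set" and E :: "'a set set"
  assumes n: "n \<ge> 3" and r: "r \<ge> 3" and G: "simple_graph V E"
    and R: "is_ramsey r (K_verts n) (K_edges n) V E"
  shows "is_ramsey r (disj_union_verts (K_verts n) (K_verts (n - 1)))
                     (disj_union_edges (K_edges n) (K_edges (n - 1))) V E"
  unfolding is_ramsey_def
proof (intro allI impI)
  fix c :: "'a set \<Rightarrow> nat" assume cr: "\<forall>e\<in>E. c e < r"
  show "mono_copy (disj_union_verts (K_verts n) (K_verts (n - 1)))
                     (disj_union_edges (K_edges n) (K_edges (n - 1))) V E c"
  proof (rule ccontr)
    assume noU: "\<not> mono_copy (disj_union_verts (K_verts n) (K_verts (n - 1)))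
                     (disj_union_edges (K_edges n) (K_edges (n - 1))) V E c"
    have fV: "finite V" and EV: "\<forall>e\<in>E. e \<subseteq> V \<and> card e = 2" using G unfolding simple_graph_def by auto
    define J where "J = {j. j < r \<and> (\<exists>Q. card Q = n \<and> mclq V E c j Q)}"
    define S where "S j = (SOME Q. card Q = n \<and> mclq V E c j Q)" for j
    have SP: "\<And>j. j \<in> J \<Longrightarrow> card (S j) = n \<and> mclq V E c j (S j)"
    proof -
      fix j assume "j \<in> J"
      hence "\<exists>Q. card Q = n \<and> mclq V E c j Q" unfolding J_def by blast
      thus "card (S j) = n \<and> mclq V E c j (S j)" unfolding S_def by (rule someI_ex)
    qed
    have SV: "\<And>j. j \<in> J \<Longrightarrow> S j \<subseteq> V" using SP unfolding mclq_def by blast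
    have F1: "\<And>j B. j \<in> J \<Longrightarrow> mclq V E c j B \<Longrightarrow> B \<inter> S j = {} \<Longrightarrow> card B < n - 1"
    proof (rule ccontr)
      fix j B assume j: "j \<in> J" and mB: "mclq V E c j B" and d: "B \<inter> S j = {}" and "\<not> card B < n - 1"
      hence "n - 1 \<le> card B" by simp
      then obtain B' where B': "B' \<subseteq> B" "card B' = n - 1" by (meson obtain_subset_with_card_n)
      have "mono_copy (disj_union_verts (K_verts n) (K_verts (n - 1)))
                     (disj_union_edges (K_edges n) (K_edges (n - 1))) V E c"
      proof (rule union_of_cliques[OF n])
        show "card (S j) = n" "mclq V E c j (S j)" using SP[OF j] by auto
        show "card B' = n - 1" by (rule B'(2))
        show "S j \<inter> B' = {}" using d B'(1) by blast
        show "mclq V E c j B'" using mclq_subset[OF mB B'(1)] .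
      qed
      thus False using noU by blast
    qed
    have F2: "\<And>j B. j < r \<Longrightarrow> j \<notin> J \<Longrightarrow> mclq V E c j B \<Longrightarrow> card B < n"
    proof (rule ccontr)
      fix j B assume j: "j < r" "j \<notin> J" and mB: "mclq V E c j B" and "\<not> card B < n"
      hence "n \<le> card B" by simp
      then obtain B' where B': "B' \<subseteq> B" "card B' = n" by (meson obtain_subset_with_card_n)
      hence "j \<in> J" unfolding J_def using j mclq_subset[OF mB B'(1)] by blast
      thus False using j by blast
    qed
    define U where "U = (\<Union>j\<in>J. S j)"
    have fJ: "finite J" unfolding J_def by simp
    have JR: "J \<subseteq> {..<r}" unfolding J_def by auto
    have UV: "U \<subseteq> V" unfolding U_def using SV by blast
    have fU: "finite U" using UV fV finite_subset by blast
    have cU: "card U \<le> card J * n"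
    proof -
      have "card U \<le> (\<Sum>j\<in>J. card (S j))" unfolding U_def by (rule card_UN_le[OF fJ])
      also have "\<dots> = (\<Sum>j\<in>J. n)" using SP by (intro sum.cong) auto
      also have "\<dots> = card J * n" by simp
      finally show ?thesis .
    qed
    have SU: "\<And>j. j \<in> J \<Longrightarrow> S j \<subseteq> U" unfolding U_def by blast
    obtain col' :: "'a \<Rightarrow> 'a \<Rightarrow> nat" and \<phi> where
      phiJ: "\<forall>u\<in>U. \<phi> u \<in> J" and
      colsym: "\<forall>u\<in>U. \<forall>v\<in>U. col' u v = col' v u \<and> col' u v < r" and
      collab: "\<forall>u\<in>U. \<forall>v\<in>U. u \<noteq> v \<and> \<phi> u = \<phi> v \<longrightarrow> col' u v \<noteq> \<phi> u" and
      colmono: "\<forall>Q k. Q \<subseteq> U \<and> card Q = n \<longrightarrow> \<not> mono_set col' k Q"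
      using colouring_U[OF n r fU cU JR] by blast
    define F where "F x y = (if x \<in> U \<and> y \<in> U then col' x y else if x \<in> U then \<phi> x
        else if y \<in> U then \<phi> y else c {x,y})" for x y
    have Fsym: "\<And>x y. F x y = F y x" unfolding F_def using colsym by (auto simp: insert_commute)
    define c' where "c' e = (SOME k. \<exists>x y. e = {x,y} \<and> x \<noteq> y \<and> k = F x y)" for e
    have c'eq: "\<And>x y. x \<noteq> y \<Longrightarrow> c' {x,y} = F x y"
    proof -
      fix x y :: 'a assume xy: "x \<noteq> y"
      have ex: "\<exists>k. \<exists>x' y'. {x,y} = {x',y'} \<and> x' \<noteq> y' \<and> k = F x' y'" using xy by blast
      obtain x' y' where w: "{x,y} = {x',y'}" "x' \<noteq> y'" "c' {x,y} = F x' y'"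
        using someI_ex[OF ex] unfolding c'_def by blast
      have "(x' = x \<and> y' = y) \<or> (x' = y \<and> y' = x)" using w(1) by (auto simp: doubleton_eq_iff)
      thus "c' {x,y} = F x y" using w(3) Fsym by auto
    qed
    have c'r: "\<forall>e\<in>E. c' e < r"
    proof
      fix e assume eE: "e \<in> E"
      have "card e = 2" using EV eE by blast
      then obtain x y where xy: "e = {x,y}" "x \<noteq> y" by (meson card_2_iff)
      have "F x y < r"
      proof -
        have "x \<in> U \<Longrightarrow> y \<in> U \<Longrightarrow> col' x y < r" using colsym by blast
        moreover have "x \<in> U \<Longrightarrow> \<phi> x < r" using phiJ JR by auto
        moreover have "y \<in> U \<Longrightarrow> \<phi> y < r" using phiJ JR by auto
        moreover have "c {x,y} < r" using cr eE xy by auto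
        ultimately show ?thesis unfolding F_def by auto
      qed
      thus "c' e < r" using c'eq xy by simp
    qed
    have "mono_copy (K_verts n) (K_edges n) V E c'" using R c'r unfolding is_ramsey_def by blast
    then obtain Q \<kappa> where cQ: "card Q = n" and mQ: "mclq V E c' \<kappa> Q" using clique_of_copy by blast
    have QV: "Q \<subseteq> V" using mQ unfolding mclq_def by blast
    have Fk: "\<And>x y. x \<in> Q \<Longrightarrow> y \<in> Q \<Longrightarrow> x \<noteq> y \<Longrightarrow> F x y = \<kappa> \<and> {x,y} \<in> E"
      using mQ c'eq unfolding mclq_def by metis
    have fQ: "finite Q" using QV fV finite_subset by blast
    show False
    proof (cases "Q \<subseteq> U")
      case True
      have "mono_set col' \<kappa> Q" unfolding mono_set_def
      proof (intro ballI impI)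
        fix x y assume "x \<in> Q" "y \<in> Q" "x \<noteq> y"
        thus "col' x y = \<kappa>" using Fk True unfolding F_def by force
      qed
      thus False using colmono True cQ by blast
    next
      case False
      then obtain w where wQ: "w \<in> Q" and wU: "w \<notin> U" by blast
      define B where "B = Q - U"
      have mB: "mclq V E c \<kappa> B" unfolding mclq_def
      proof (intro conjI ballI impI)
        show "B \<subseteq> V" using QV B_def by blast
      next
        fix x y assume "x \<in> B" "y \<in> B" "x \<noteq> y"
        hence "F x y = \<kappa> \<and> {x,y} \<in> E" "x \<notin> U" "y \<notin> U" using Fk B_def by auto
        thus "{x,y} \<in> E" "c {x,y} = \<kappa>" unfolding F_def by auto
      qed
      have BS: "\<kappa> \<in> J \<Longrightarrow> B \<inter> S \<kappa> = {}" using SU B_def by blast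
      show False
      proof (cases "\<exists>u\<in>Q. u \<in> U")
        case True
        then obtain u where uQ: "u \<in> Q" and uU: "u \<in> U" by blast
        have uw: "u \<noteq> w" using uU wU by blast
        have "F u w = \<kappa>" using Fk uQ wQ uw by blast
        hence ku: "\<phi> u = \<kappa>" using uU wU unfolding F_def by simp
        hence kJ: "\<kappa> \<in> J" using phiJ uU by blast
        have QU: "Q \<inter> U \<subseteq> {u}"
        proof
          fix v assume v: "v \<in> Q \<inter> U"
          show "v \<in> {u}"
          proof (rule ccontr)
            assume "v \<notin> {u}"
            hence vu: "v \<noteq> u" by simp
            have vw: "v \<noteq> w" using v wU by blast
            have "F v w = \<kappa>" using Fk v wQ vw by blast
            hence kv: "\<phi> v = \<kappa>" using v wU unfolding F_def by simp
            have "F u v = \<kappa>" using Fk uQ v vu by blast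
            hence "col' u v = \<kappa>" using uU v unfolding F_def by simp
            moreover have "col' u v \<noteq> \<phi> u"
              using collab[rule_format, of u v] uU v vu ku kv by auto
            ultimately show False using ku by simp
          qed
        qed
        have "Q - {u} \<subseteq> B" using QU B_def by blast
        hence "card (Q - {u}) \<le> card B" using fQ B_def by (intro card_mono) auto
        moreover have "card (Q - {u}) = n - 1" using cQ uQ fQ by simp
        ultimately have "n - 1 \<le> card B" by simp
        moreover have "card B < n - 1" using F1[OF kJ mB BS[OF kJ]] .
        ultimately show False by simp
      next
        case False
        hence BQ: "B = Q" using B_def by blast
        have "Q - {w} \<noteq> {}" using cQ fQ wQ n
          by (metis Diff_empty Diff_insert0 card_Diff_singleton card.empty diff_is_0_eq le_trans numeral_le_one_iff semiring_norm(70) One_nat_def not_one_le_zero insert_Diff)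
        then obtain w' where w': "w' \<in> Q" "w' \<noteq> w" by blast
        have "{w,w'} \<in> E" "c {w,w'} = \<kappa>" using mB BQ wQ w' unfolding mclq_def by auto
        hence kr: "\<kappa> < r" using cr by auto
        show False
        proof (cases "\<kappa> \<in> J")
          case True
          have "card B < n - 1" using F1[OF True mB BS[OF True]] .
          thus False using BQ cQ by simp
        next
          case False
          have "card B < n" using F2[OF kr False mB] .
          thus False using BQ cQ by simp
        qed
      qed
    qed
  qed
qed

theorem mainTheorem1:
  fixes n r :: nat and V :: "'a set" and E :: "'a set set"
  assumes "n \<ge> 3" and "r \<ge> 3" and "simple_graph V E"
  shows "is_ramsey r (K_verts n) (K_edges n) V E \<longleftrightarrow>
         is_ramsey r (disj_union_verts (K_verts n) (K_verts (n - 1)))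
                     (disj_union_edges (K_edges n) (K_edges (n - 1))) V E"
  using hard_dir[OF assms] easy_dir by blast

end
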